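(* Let $X$ and $Y$ be finite sets with $|Y| = n$, let $I = X \cap Y$, and let $p \in [1/2, 1]$. Define two random variables as follows. (1) (Mechanism $\mathcal M_Y$.) Include each element $y \in Y$ in a random subset $Y_{\mathrm{sub}} \subseteq Y$ independently with probability $p$, and set $Z = |X \cap Y_{\mathrm{sub}}|$. (2) (Mechanism $\mathcal M'_Y$.) Sample $s \sim \mathrm{Bin}(n, 2(1-p))$; then choose $T$ uniformly at random among all subsets of $Y$ of cardinality $s$; then, independently for each $y \in I \cap T$, flip a fair coin $c_y \sim \mathrm{Ber}(1/2)$; set $Z' = |I \setminus T| + \sum_{y \in I \cap T} c_y$. Then $Z$ and $Z'$ have the same probability mass function: $\Pr[Z = z] = \Pr[Z' = z]$ for all integers $z \ge 0$.
   Context: $\mathrm{Ber}(r)$ denotes a Bernoulli random variable with success probability $r$, and $\mathrm{Bin}(m, r)$ a binomial random variable with $m$ trials and success probability $r$. All random choices are independent unless stated otherwise. *)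

theory Defs
  imports "HOL-Probability.Probability"
begin

definition mech_M :: "'a set \<Rightarrow> 'a set \<Rightarrow> real \<Rightarrow> nat pmf" where
  "mech_M X Y p =
     map_pmf (\<lambda>b. card (X \<inter> {y \<in> Y. b y})) (Pi_pmf Y False (\<lambda>_. bernoulli_pmf p))"

definition mech_M' :: "'a set \<Rightarrow> 'a set \<Rightarrow> real \<Rightarrow> nat pmf" where
  "mech_M' X Y p =
     do {
       s \<leftarrow> binomial_pmf (card Y) (2 * (1 - p));
       T \<leftarrow> pmf_of_set {T. T \<subseteq> Y \<and> card T = s};
       c \<leftarrow> Pi_pmf (X \<inter> Y \<inter> T) False (\<lambda>_. bernoulli_pmf (1/2));
       return_pmf (card ((X \<inter> Y) - T) + card {y \<in> X \<inter> Y \<inter> T. c y})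
     }"

end

theory Submission
  imports Defs
begin

lemma subset_dist:
  assumes Y: "finite Y" and q: "0 \<le> q" "q \<le> 1"
  shows "bind_pmf (binomial_pmf (card Y) q) (\<lambda>s. pmf_of_set {T. T \<subseteq> Y \<and> card T = s})
       = map_pmf (\<lambda>b. {y\<in>Y. b y}) (Pi_pmf Y False (\<lambda>_. bernoulli_pmf q))"
    (is "?L = ?R")
proof (rule pmf_eqI)
  fix T :: "'a set"
  define S where "S = (\<lambda>s. {T. T \<subseteq> Y \<and> card T = s})"
  have Sfin: "finite (S s)" for s
    by (rule finite_subset[of _ "Pow Y"]) (auto simp: S_def Y)
  have Sne: "S s \<noteq> {}" if "s \<in> set_pmf (binomial_pmf (card Y) q)" for s
  proof -
    from that q have "s \<le> card Y" by (auto simp: set_pmf_iff)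
    then obtain U where "U \<subseteq> Y" "card U = s" using obtain_subset_with_card_n by metis
    thus ?thesis by (auto simp: S_def)
  qed
  have Rpre: "pmf ?R T = measure_pmf.prob (Pi_pmf Y False (\<lambda>_. bernoulli_pmf q)) ((\<lambda>b. {y\<in>Y. b y}) -` {T})"
    by (simp add: pmf_map)
  show "pmf ?L T = pmf ?R T"
  proof (cases "T \<subseteq> Y")
    case False
    have "pmf ?L T = (\<Sum>a\<in>{}. pmf (pmf_of_set {U. U \<subseteq> Y \<and> card U = a}) T * pmf (binomial_pmf (card Y) q) a)"
      unfolding pmf_bind
      by (rule integral_measure_pmf_real) (use False Sne Sfin in \<open>auto simp: S_def\<close>)
    moreover have "(\<lambda>b. {y\<in>Y. b y}) -` {T} = {}" using False by auto
    ultimately show ?thesis using Rpre by simp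
  next
    case True
    have TY: "card T \<le> card Y" using True Y by (simp add: card_mono)
    have "pmf ?L T = (\<Sum>a\<in>{card T}. pmf (pmf_of_set {U. U \<subseteq> Y \<and> card U = a}) T * pmf (binomial_pmf (card Y) q) a)"
      unfolding pmf_bind
      by (rule integral_measure_pmf_real) (use Sne Sfin in \<open>auto simp: S_def indicator_def split: if_splits\<close>)
    also have "\<dots> = 1 / (card Y choose card T) * ((card Y choose card T) * q ^ card T * (1 - q) ^ (card Y - card T))"
    proof -
      have ne: "{U. U \<subseteq> Y \<and> card U = card T} \<noteq> {}" using True by auto
      have "pmf (pmf_of_set {U. U \<subseteq> Y \<and> card U = card T}) T = 1 / (card Y choose card T)"
        using True Sfin[of "card T"] ne by (simp add: S_def n_subsets Y)
      then show ?thesis using q by simp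
    qed
    also have "\<dots> = q ^ card T * (1 - q) ^ (card Y - card T)"
      using TY by (simp add: field_simps)
    finally have l: "pmf ?L T = q ^ card T * (1 - q) ^ (card Y - card T)" .
    define g where "g = (\<lambda>y. y \<in> T)"
    have "measure_pmf.prob (Pi_pmf Y False (\<lambda>_. bernoulli_pmf q)) ((\<lambda>b. {y\<in>Y. b y}) -` {T})
        = measure_pmf.prob (Pi_pmf Y False (\<lambda>_. bernoulli_pmf q)) {g}"
    proof (rule measure_prob_cong_0)
      fix x assume x: "x \<in> ((\<lambda>b. {y\<in>Y. b y}) -` {T} - {g})"
      then have "\<exists>y. y \<notin> Y \<and> x y \<noteq> False" using True by (auto simp: g_def fun_eq_iff)
      then show "pmf (Pi_pmf Y False (\<lambda>_. bernoulli_pmf q)) x = 0"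
        using Y by (auto simp: pmf_Pi)
    next
      fix x assume x: "x \<in> {g} - (\<lambda>b. {y\<in>Y. b y}) -` {T}"
      then show "pmf (Pi_pmf Y False (\<lambda>_. bernoulli_pmf q)) x = 0"
        using True by (auto simp: g_def)
    qed
    also have "\<dots> = (\<Prod>y\<in>Y. pmf (bernoulli_pmf q) (g y))"
      using Y True by (auto simp: measure_pmf_single pmf_Pi g_def)
    also have "\<dots> = (\<Prod>y\<in>T. pmf (bernoulli_pmf q) (g y)) * (\<Prod>y\<in>Y - T. pmf (bernoulli_pmf q) (g y))"
      using Y True by (metis mult.commute prod.subset_diff)
    also have "\<dots> = q ^ card T * (1 - q) ^ (card Y - card T)"
      using Y True q by (simp add: g_def card_Diff_subset finite_subset)
    finally show ?thesis using l Rpre by simp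
  qed
qed


lemma coin_combine:
  assumes q: "0 \<le> q" "q \<le> 1" and pq: "q = 2 * (1 - p)"
  shows "do {b \<leftarrow> bernoulli_pmf q; c \<leftarrow> bernoulli_pmf (1/2); return_pmf (\<not> b \<or> c)} = bernoulli_pmf p"
proof (rule pmf_eqI)
  fix x :: bool
  have p: "0 \<le> p" "p \<le> 1" using q pq by auto
  have "pmf (do {b \<leftarrow> bernoulli_pmf q; c \<leftarrow> bernoulli_pmf (1/2); return_pmf (\<not> b \<or> c)}) x
     = (\<Sum>b\<in>UNIV. pmf (do {c \<leftarrow> bernoulli_pmf (1/2); return_pmf (\<not> b \<or> c)}) x * pmf (bernoulli_pmf q) b)"
    unfolding pmf_bind[of "bernoulli_pmf q"] by (rule integral_measure_pmf_real) auto
  also have "\<dots> = pmf (bernoulli_pmf p) x"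
  proof -
    have i: "pmf (do {c \<leftarrow> bernoulli_pmf (1/2); return_pmf (\<not> b \<or> c)}) x
        = (\<Sum>c\<in>UNIV. pmf (return_pmf (\<not> b \<or> c)) x * pmf (bernoulli_pmf (1/2)) c)" for b
      unfolding pmf_bind[of "bernoulli_pmf (1/2)"] by (rule integral_measure_pmf_real) auto
    show ?thesis unfolding i using q p pq by (cases x) (auto simp: UNIV_bool indicator_def field_simps)
  qed
  finally show "pmf (do {b \<leftarrow> bernoulli_pmf q; c \<leftarrow> bernoulli_pmf (1/2); return_pmf (\<not> b \<or> c)}) x = pmf (bernoulli_pmf p) x" .
qed

lemma step2:
  assumes Y: "finite Y" and I: "I \<subseteq> Y"
  shows "do {b \<leftarrow> Pi_pmf Y False (\<lambda>_. bernoulli_pmf q); c \<leftarrow> Pi_pmf Y False (\<lambda>_. bernoulli_pmf (1/2));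
             return_pmf (card {y\<in>I. \<not> b y \<or> c y})}
       = map_pmf (\<lambda>d. card {y\<in>I. d y})
           (Pi_pmf Y False (\<lambda>_. do {b \<leftarrow> bernoulli_pmf q; c \<leftarrow> bernoulli_pmf (1/2); return_pmf (\<not> b \<or> c)}))"
proof -
  have "Pi_pmf Y False (\<lambda>_. do {b \<leftarrow> bernoulli_pmf q; c \<leftarrow> bernoulli_pmf (1/2); return_pmf (\<not> b \<or> c)})
      = do {f \<leftarrow> Pi_pmf Y False (\<lambda>_. bernoulli_pmf q);
            Pi_pmf Y False (\<lambda>y. do {c \<leftarrow> bernoulli_pmf (1/2); return_pmf (\<not> f y \<or> c)})}"
    using Y by (rule Pi_pmf_bind)
  also have "\<dots> = do {f \<leftarrow> Pi_pmf Y False (\<lambda>_. bernoulli_pmf q);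
            g \<leftarrow> Pi_pmf Y False (\<lambda>_. bernoulli_pmf (1/2));
            return_pmf (\<lambda>y. if y \<in> Y then \<not> f y \<or> g y else False)}"
  proof (rule bind_pmf_cong[OF refl])
    fix f :: "'a \<Rightarrow> bool"
    have "Pi_pmf Y False (\<lambda>y. do {c \<leftarrow> bernoulli_pmf (1/2); return_pmf (\<not> f y \<or> c)})
        = do {g \<leftarrow> Pi_pmf Y False (\<lambda>_. bernoulli_pmf (1/2)); Pi_pmf Y False (\<lambda>y. return_pmf (\<not> f y \<or> g y))}"
      using Y by (rule Pi_pmf_bind)
    also have "\<dots> = do {g \<leftarrow> Pi_pmf Y False (\<lambda>_. bernoulli_pmf (1/2));
            return_pmf (\<lambda>y. if y \<in> Y then \<not> f y \<or> g y else False)}"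
      using Y by simp
    finally show "Pi_pmf Y False (\<lambda>y. do {c \<leftarrow> bernoulli_pmf (1/2); return_pmf (\<not> f y \<or> c)}) = \<dots>" .
  qed
  finally have e: "Pi_pmf Y False (\<lambda>_. do {b \<leftarrow> bernoulli_pmf q; c \<leftarrow> bernoulli_pmf (1/2); return_pmf (\<not> b \<or> c)}) = \<dots>" .
  have c: "card {y\<in>I. if y \<in> Y then \<not> f y \<or> g y else False} = card {y\<in>I. \<not> f y \<or> g y}" for f g
    using I by (intro arg_cong[where f=card]) auto
  show ?thesis unfolding e by (simp add: map_bind_pmf c)
qed


theorem lemma2:
  fixes X Y :: "'a set" and p :: real and n :: nat
  assumes "finite X" and "finite Y" and "card Y = n"
    and "1/2 \<le> p" and "p \<le> 1"
  shows "\<forall>z::nat. pmf (mech_M X Y p) z = pmf (mech_M' X Y p) z"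
proof -
  define q where "q = 2 * (1 - p)"
  define I where "I = X \<inter> Y"
  have q: "0 \<le> q" "q \<le> 1" using assms by (auto simp: q_def)
  have Y: "finite Y" and IY: "I \<subseteq> Y" using assms by (auto simp: I_def)
  define B where "B = Pi_pmf Y False (\<lambda>_. bernoulli_pmf q)"
  define C where "C = Pi_pmf Y False (\<lambda>_. bernoulli_pmf (1/2))"
  define K where "K = (\<lambda>T. do {c \<leftarrow> Pi_pmf (I \<inter> T) False (\<lambda>_. bernoulli_pmf (1/2));
       return_pmf (card (I - T) + card {y \<in> I \<inter> T. c y})})"
  have "mech_M' X Y p = bind_pmf (bind_pmf (binomial_pmf (card Y) q) (\<lambda>s. pmf_of_set {T. T \<subseteq> Y \<and> card T = s})) K"
    unfolding mech_M'_def K_def I_def q_def by (simp add: bind_assoc_pmf)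
  also have "\<dots> = bind_pmf (map_pmf (\<lambda>b. {y\<in>Y. b y}) B) K"
    unfolding B_def by (simp add: subset_dist[OF Y q])
  also have "\<dots> = do {b \<leftarrow> B; c \<leftarrow> C; return_pmf (card {y\<in>I. \<not> b y \<or> c y})}"
    unfolding bind_map_pmf
  proof (rule bind_pmf_cong[OF refl])
    fix b :: "'a \<Rightarrow> bool"
    define T where "T = {y\<in>Y. b y}"
    have "Pi_pmf (I \<inter> T) False (\<lambda>_. bernoulli_pmf (1/2))
        = map_pmf (\<lambda>f x. if x \<in> I \<inter> T then f x else False) C"
      unfolding C_def by (rule Pi_pmf_subset) (use Y IY in auto)
    then have "K T = do {c \<leftarrow> C; return_pmf (card (I - T) + card {y \<in> I \<inter> T. (if y \<in> I \<inter> T then c y else False)})}"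
      unfolding K_def by (simp add: bind_map_pmf)
    also have "\<dots> = do {c \<leftarrow> C; return_pmf (card {y\<in>I. \<not> b y \<or> c y})}"
    proof (rule bind_pmf_cong[OF refl])
      fix c :: "'a \<Rightarrow> bool"
      have fin: "finite I" using Y IY finite_subset by blast
      have "card (I - T) + card {y \<in> I \<inter> T. (if y \<in> I \<inter> T then c y else False)}
          = card ((I - T) \<union> {y \<in> I \<inter> T. c y})"
        by (subst card_Un_disjoint) (use fin in \<open>auto intro: arg_cong[where f=card]\<close>)
      also have "(I - T) \<union> {y \<in> I \<inter> T. c y} = {y\<in>I. \<not> b y \<or> c y}"
        using IY by (auto simp: T_def)
      finally show "return_pmf (card (I - T) + card {y \<in> I \<inter> T. (if y \<in> I \<inter> T then c y else False)})
          = return_pmf (card {y\<in>I. \<not> b y \<or> c y})" by simp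
    qed
    finally show "K {y\<in>Y. b y} = \<dots>" unfolding T_def .
  qed
  also have "\<dots> = map_pmf (\<lambda>d. card {y\<in>I. d y})
           (Pi_pmf Y False (\<lambda>_. do {b \<leftarrow> bernoulli_pmf q; c \<leftarrow> bernoulli_pmf (1/2); return_pmf (\<not> b \<or> c)}))"
    unfolding B_def C_def by (rule step2[OF Y IY])
  also have "\<dots> = map_pmf (\<lambda>d. card {y\<in>I. d y}) (Pi_pmf Y False (\<lambda>_. bernoulli_pmf p))"
    by (simp only: coin_combine[OF q q_def])
  also have "\<dots> = mech_M X Y p"
    unfolding mech_M_def I_def by (intro map_pmf_cong refl arg_cong[where f=card]) auto
  finally show ?thesis by simp
qed

end
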